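(* (Perfect completeness of the Meadows protocol.) Let a Meadows puzzle on an $n\times n$ grid be given. If the prover $P$ knows a solution of the puzzle and follows the Meadows zero-knowledge protocol described in the context, then the verifier $V$ always accepts.
   Context: Meadows puzzle: an $n\times n$ grid in which some cells $c_1,\dots,c_k$ contain a dot. A solution is a partition of the grid into squares (axis-aligned $s\times s$ blocks of cells) such that each square contains exactly one dotted cell. Cards: each card has either an integer or nothing (a blank card) on its front; all backs are indistinguishable. A pile-shifting shuffle applied to a matrix of face-down cards (entries may be equal-size stacks per row) cyclically shifts its columns by a uniformly random amount unknown to everyone. Chosen cut protocol: given face-down cards (or equal-size stacks) $c'_1,\dots,c'_q$ and a secret index $i$ chosen by $P$, $P$ forms a $3\times q$ matrix with row 1 equal to $c'_1,\dots,c'_q$, row 2 a face-down card $1$ in column $i$ and $0$ elsewhere, row 3 a card $1$ in column 1 and $0$ elsewhere (turned face-down); a pile-shifting shuffle is applied; row 2 is revealed and the card of row 1 above the $1$ is $c'_i$; after use it is put back, face-up cards are turned down, another pile-shifting shuffle is applied, row 3 is revealed and the columns are shifted cyclically so its $1$ returns to column 1. Printing protocol: given a face-down $p\times q$ template and a $p\times q$ area, each template card is placed on the corresponding area card; for each two-card stack, $P$ uses the chosen cut protocol to select a card, it is revealed, $V$ rejects unless it is blank, and it is removed. Meadows protocol: $P$ publicly puts a blank card on every cell, appends $n-1$ rows and $n-1$ columns of blank dummy cards below and to the right, and turns all cards face-down, giving a $(2n-1)\times(2n-1)$ matrix (read row by row as a sequence). $P$ builds $n$ templates, one for each $s=1,\dots,n$: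 an $n\times n$ matrix whose top-left $s\times s$ block consists of cards $1$ and whose other cards are blank; $V$ checks them. Let $B_1,\dots,B_k$ be the squares of $P$'s solution with $c_i\in B_i$. For $i=1,\dots,k$: (1) via the chosen cut protocol $P$ selects the top-left card of the $n\times n$ area whose top-left corner is that of $B_i$; (2) via the chosen cut protocol $P$ selects the template of $B_i$'s size; (3) the printing protocol is applied; (4) all cards on dotted cells are revealed and $V$ rejects unless those on $c_1,\dots,c_i$ are $1$ and those on $c_{i+1},\dots,c_k$ are blank (they are then turned face-down again); (5) $P$ reconstructs the used template, returns it to the pile, and $V$ checks all $n$ templates (rejecting otherwise). Finally $P$ reveals all grid cards and $V$ rejects unless all are $1$; $P$ reveals all dummy cards and $V$ rejects unless all are blank. Otherwise $V$ accepts. *)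

theory Defs
  imports Main
begin

datatype card = Blank | Num int

text \<open>Cells are pairs (row, column), 0-indexed; the grid is {0..<n} x {0..<n}.
  A square (r, c, s) is the s x s block with top-left cell (r, c).\<close>

definition grid :: "nat \<Rightarrow> (nat \<times> nat) set" where
  "grid n = {0..<n} \<times> {0..<n}"

fun cells :: "nat \<times> nat \<times> nat \<Rightarrow> (nat \<times> nat) set" where
  "cells (r, c, s) = {r..<r+s} \<times> {c..<c+s}"

definition meadows_puzzle :: "nat \<Rightarrow> (nat \<times> nat) list \<Rightarrow> bool" where
  "meadows_puzzle n dots \<longleftrightarrow> distinct dots \<and> set dots \<subseteq> grid n"

definition is_meadows_solution ::
  "nat \<Rightarrow> (nat \<times> nat) list \<Rightarrow> (nat \<times> nat \<times> nat) set \<Rightarrow> bool" where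
  "is_meadows_solution n dots S \<longleftrightarrow>
     (\<forall>B\<in>S. 1 \<le> snd (snd B) \<and> cells B \<subseteq> grid n) \<and>
     (\<forall>B\<in>S. \<forall>B'\<in>S. B \<noteq> B' \<longrightarrow> cells B \<inter> cells B' = {}) \<and>
     \<Union> (cells ` S) = grid n \<and>
     (\<forall>B\<in>S. card (set dots \<inter> cells B) = 1)"

text \<open>A pile-shifting shuffle cyclically shifts the columns by an amount r
  (rotate r on the list of columns). The chosen cut protocol on row-1 entries xs
  with secret index i (0-indexed), using shuffle amounts r1 and r2.
  The argument use gets the (shifted) row 1 and the column p of the selected entry
  (the entry above the revealed card 1 of row 2); it returns the modified row 1
  together with some extra result, or None if V rejected during the use.
  Afterwards the cards are put back, a second shuffle r2 is applied, row 3 is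
  revealed and the columns are shifted so that its 1 returns to column 1.\<close>

definition chosen_cut ::
  "nat \<Rightarrow> nat \<Rightarrow> 'a list \<Rightarrow> nat \<Rightarrow> ('a list \<Rightarrow> nat \<Rightarrow> ('a list \<times> 'b) option)
     \<Rightarrow> ('a list \<times> 'b) option" where
  "chosen_cut r1 r2 xs i use =
     (let q = length xs;
          row2 = map (\<lambda>j. if j = i then Num 1 else Num 0) [0..<q];
          row3 = map (\<lambda>j. if j = 0 then Num 1 else Num 0) [0..<q];
          M1 = rotate r1 (zip xs (zip row2 row3));
          p = (LEAST j. j < q \<and> fst (snd (M1 ! j)) = Num 1)
      in case use (map fst M1) p of
           None \<Rightarrow> None
         | Some (ys, b) \<Rightarrow>
             (let M2 = rotate r2 (zip ys (map snd M1));
                  p3 = (LEAST j. j < q \<and> snd (snd (M2 ! j)) = Num 1)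
              in Some (map fst (rotate p3 M2), b)))"

text \<open>Printing one two-card stack (template card t on area card a), with shuffle
  amounts (r1, r2). The honest prover selects a blank card (the template card if it
  is blank, else the area card). The selected card is revealed, V rejects unless it
  is blank, and it is removed (None = no card in that position).\<close>

definition print_stack :: "nat \<times> nat \<Rightarrow> card \<Rightarrow> card \<Rightarrow> card option" where
  "print_stack rr t a =
     (case chosen_cut (fst rr) (snd rr) [Some t, Some a] (if t = Blank then 0 else 1)
             (\<lambda>ys p. case ys ! p of
                        Some c \<Rightarrow> if c = Blank then Some (ys[p := None], ()) else None
                      | None \<Rightarrow> None) of
        None \<Rightarrow> None
      | Some (ys, _) \<Rightarrow> (case filter (\<lambda>x. x \<noteq> None) ys of [Some c] \<Rightarrow> Some c | _ \<Rightarrow> None))"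

text \<open>Printing protocol: template tpl (n x n, row-major list) onto the n x n area of the
  (shifted) sequence area (rows of width w) whose top-left card is at position p.
  R gives the shuffle amounts for the stack at template position (a, b).\<close>

fun print_seq ::
  "(nat \<times> nat \<Rightarrow> nat \<times> nat) \<Rightarrow> nat \<Rightarrow> nat \<Rightarrow> card list \<Rightarrow> nat \<Rightarrow> (nat \<times> nat) list
     \<Rightarrow> card list \<Rightarrow> card list option" where
  "print_seq R n w tpl p [] area = Some area"
| "print_seq R n w tpl p ((a, b) # L) area =
     (let pos = (p + a * w + b) mod length area in
      case print_stack (R (a, b)) (tpl ! (a * n + b)) (area ! pos) of
        None \<Rightarrow> None
      | Some c \<Rightarrow> print_seq R n w tpl p L (area[pos := c]))"

definition template :: "nat \<Rightarrow> nat \<Rightarrow> card list" where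
  "template n s = concat (map (\<lambda>a. map (\<lambda>b. if a < s \<and> b < s then Num 1 else Blank) [0..<n]) [0..<n])"

definition templates :: "nat \<Rightarrow> card list list" where
  "templates n = map (template n) [1..<n+1]"

text \<open>The (2n-1) x (2n-1) matrix is stored row by row; cell (x, y) is at x*(2n-1)+y.
  The randomness sigma assigns to every pile-shifting shuffle (identified by a label)
  its shift amount:  [i,0,j] area cut of step i, [i,1,j] template cut of step i,
  [i,2,a,b,j] printing of stack (a,b) in step i  (j = 0 first, j = 1 second shuffle).
  The state is (matrix, template pile).\<close>

definition meadows_step ::
  "(nat list \<Rightarrow> nat) \<Rightarrow> nat \<Rightarrow> (nat \<times> nat) list \<Rightarrow> nat \<Rightarrow> nat \<times> nat \<times> nat
     \<Rightarrow> card list \<times> card list list \<Rightarrow> (card list \<times> card list list) option" where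
  "meadows_step \<sigma> n dots i B st =
     (let w = 2 * n - 1; r = fst B; c = fst (snd B); s = snd (snd B);
          L = concat (map (\<lambda>a. map (\<lambda>b. (a, b)) [0..<n]) [0..<n])
      in case chosen_cut (\<sigma> [i,0,0]) (\<sigma> [i,0,1]) (fst st) (r * w + c)
                (\<lambda>A p. case chosen_cut (\<sigma> [i,1,0]) (\<sigma> [i,1,1]) (snd st) (s - 1)
                    (\<lambda>T pt. case print_seq (\<lambda>(a, b). (\<sigma> [i,2,a,b,0], \<sigma> [i,2,a,b,1]))
                                         n w (T ! pt) p L A of
                             None \<Rightarrow> None
                           | Some A' \<Rightarrow> Some (T[pt := template n s], A')) of
                   None \<Rightarrow> None
                 | Some (T', A') \<Rightarrow> Some (A', T')) of
           None \<Rightarrow> None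
         | Some (A', T') \<Rightarrow>
             (if (\<forall>j<length dots. A' ! (fst (dots ! j) * w + snd (dots ! j))
                                   = (if j \<le> i then Num 1 else Blank))
                 \<and> T' = templates n
              then Some (A', T') else None))"

fun meadows_steps ::
  "(nat list \<Rightarrow> nat) \<Rightarrow> nat \<Rightarrow> (nat \<times> nat) list \<Rightarrow> (nat \<times> nat \<times> nat) list \<Rightarrow> nat
     \<Rightarrow> card list \<times> card list list \<Rightarrow> (card list \<times> card list list) option" where
  "meadows_steps \<sigma> n dots [] i st = Some st"
| "meadows_steps \<sigma> n dots (B # Bs) i st =
     (case meadows_step \<sigma> n dots i B st of
        None \<Rightarrow> None
      | Some st' \<Rightarrow> meadows_steps \<sigma> n dots Bs (Suc i) st')"

text \<open>V accepts the run with shuffle outcomes sigma when the prover follows the protocol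
  with the solution squares Bs = [B_1,...,B_k] (c_i in B_i).\<close>
definition meadows_accepts ::
  "(nat list \<Rightarrow> nat) \<Rightarrow> nat \<Rightarrow> (nat \<times> nat) list \<Rightarrow> (nat \<times> nat \<times> nat) list \<Rightarrow> bool" where
  "meadows_accepts \<sigma> n dots Bs =
     (let w = 2 * n - 1 in
      templates n = map (template n) [1..<n+1] \<and>
      (case meadows_steps \<sigma> n dots Bs 0 (replicate (w * w) Blank, templates n) of
         None \<Rightarrow> False
       | Some (A, T) \<Rightarrow>
           (\<forall>x<w. \<forall>y<w. A ! (x * w + y) = (if x < n \<and> y < n then Num 1 else Blank))))"

end

theory Submission
  imports Defs
begin

lemma mod_cancel_lt:
  fixes q r m j :: nat
  assumes "m < q" "j < q" "(r + m) mod q = (r + j) mod q"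
  shows "m = j"
proof -
  have "m mod q = j mod q"
    using assms(3) by (simp add: nat_mod_eq_iff)
  then show ?thesis using assms by simp
qed

lemma rotate_update:
  assumes "j < length xs" "(r + j) mod length xs = i"
  shows "(rotate r xs)[j := v] = rotate r (xs[i := v])"
proof (rule nth_equalityI)
  show "length ((rotate r xs)[j := v]) = length (rotate r (xs[i := v]))" by simp
next
  fix m assume m: "m < length ((rotate r xs)[j := v])"
  have q: "0 < length xs" using assms by auto
  have i: "i < length xs" using assms(2) q by auto
  have "(r + m) mod length xs = i \<longleftrightarrow> m = j"
    using mod_cancel_lt[of m "length xs" j r] m assms by auto
  then show "(rotate r xs)[j := v] ! m = rotate r (xs[i := v]) ! m"
    using m i by (auto simp: nth_rotate nth_list_update)
qed

lemma zip_rotate: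
  assumes "length xs = length ys"
  shows "zip (rotate r xs) (rotate r ys) = rotate r (zip xs ys)"
proof (rule nth_equalityI)
  show "length (zip (rotate r xs) (rotate r ys)) = length (rotate r (zip xs ys))"
    using assms by simp
next
  fix m assume "m < length (zip (rotate r xs) (rotate r ys))"
  then show "zip (rotate r xs) (rotate r ys) ! m = rotate r (zip xs ys) ! m"
  proof -
    have "length ys > 0" using \<open>m < _\<close> by auto
    then have "(r + m) mod length ys < length ys" by simp
    then show ?thesis using \<open>m < _\<close> assms by (simp add: nth_rotate nth_zip)
  qed
qed

lemma exists_mod_sol:
  fixes q c t :: nat
  assumes "t < q"
  shows "\<exists>j. j < q \<and> (c + j) mod q = t"
proof -
  have q: "0 < q" using assms by simp
  define j where "j = (t + (q - c mod q)) mod q"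
  have "(c + j) mod q = (c + (t + (q - c mod q))) mod q"
    unfolding j_def by (simp add: mod_add_right_eq)
  also have "\<dots> = (c mod q + (q - c mod q) + t) mod q"
    by (metis add.commute add.left_commute mod_add_left_eq)
  also have "c mod q + (q - c mod q) = q" using q by (simp add: le_add_diff_inverse less_imp_le)
  also have "(q + t) mod q = t" using assms by simp
  finally have "(c + j) mod q = t" .
  moreover have "j < q" unfolding j_def using q by simp
  ultimately show ?thesis by blast
qed

lemma chosen_cut_Some:
  assumes i: "i < length xs" and len: "length zs = length xs"
    and use: "\<And>j. j < length xs \<Longrightarrow> (r1 + j) mod length xs = i
                \<Longrightarrow> use (rotate r1 xs) j = Some (rotate r1 zs, b)"
  shows "chosen_cut r1 r2 xs i use = Some (zs, b)"
proof -
  define q where "q = length xs"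
  have q: "0 < q" using i q_def by auto
  define row2 where "row2 = map (\<lambda>j. if j = i then Num 1 else Num 0) [0..<q]"
  define row3 where "row3 = map (\<lambda>j. if j = 0 then Num 1 else Num 0) [0..<q]"
  define M1 where "M1 = rotate r1 (zip xs (zip row2 row3))"
  have lM1: "length M1 = q" unfolding M1_def row2_def row3_def q_def by simp
  have M1j: "fst (snd (M1 ! j)) = Num 1 \<longleftrightarrow> (r1 + j) mod q = i" if "j < q" for j
    using that q unfolding M1_def row2_def row3_def q_def by (simp add: nth_rotate)
  define p where "p = (LEAST j. j < q \<and> fst (snd (M1 ! j)) = Num 1)"
  have "\<exists>j. j < q \<and> fst (snd (M1 ! j)) = Num 1"
    using exists_mod_sol[of i q r1] i M1j q_def by auto
  then have pp: "p < q \<and> fst (snd (M1 ! p)) = Num 1"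
    unfolding p_def by (rule LeastI_ex)
  then have pi: "(r1 + p) mod q = i" using M1j by auto
  have fM1: "map fst M1 = rotate r1 xs"
    unfolding M1_def row2_def row3_def q_def by (simp add: rotate_map[symmetric])
  have sM1: "map snd M1 = rotate r1 (zip row2 row3)"
    unfolding M1_def row2_def row3_def q_def by (simp add: rotate_map[symmetric])
  have u: "use (map fst M1) p = Some (rotate r1 zs, b)"
    using use[of p] pp pi fM1 q_def by simp
  define M2 where "M2 = rotate r2 (zip (rotate r1 zs) (map snd M1))"
  have M2e: "M2 = rotate (r2 + r1) (zip zs (zip row2 row3))"
    unfolding M2_def sM1 using len
    by (simp add: zip_rotate rotate_rotate row2_def row3_def q_def)
  have lM2: "length M2 = q" unfolding M2e row2_def row3_def q_def using len by simp
  have M2j: "snd (snd (M2 ! j)) = Num 1 \<longleftrightarrow> (r2 + r1 + j) mod q = 0" if "j < q" for j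
    using that q len unfolding M2e row2_def row3_def q_def by (simp add: nth_rotate)
  define p3 where "p3 = (LEAST j. j < q \<and> snd (snd (M2 ! j)) = Num 1)"
  have "\<exists>j. j < q \<and> snd (snd (M2 ! j)) = Num 1"
    using exists_mod_sol[of 0 q "r2 + r1"] q M2j by auto
  then have pp3: "p3 < q \<and> snd (snd (M2 ! p3)) = Num 1"
    unfolding p3_def by (rule LeastI_ex)
  then have p3m: "(r2 + r1 + p3) mod q = 0" using M2j by auto
  have "rotate p3 M2 = rotate (p3 + (r2 + r1)) (zip zs (zip row2 row3))"
    unfolding M2e by (simp add: rotate_rotate)
  also have "\<dots> = zip zs (zip row2 row3)"
    apply (subst rotate_conv_mod)
    using p3m len by (simp add: row2_def row3_def q_def add.commute add.left_commute)
  finally have "map fst (rotate p3 M2) = zs"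
    using len by (simp add: row2_def row3_def q_def)
  then show ?thesis
    unfolding chosen_cut_def Let_def
    using u by (simp add: q_def[symmetric] row2_def[symmetric] row3_def[symmetric]
        M1_def[symmetric] p_def[symmetric] M2_def[symmetric] p3_def[symmetric])
qed


lemma print_stack_ok:
  assumes "t = Blank \<or> a = Blank"
  shows "print_stack rr t a = Some (if t = Blank then a else t)"
proof -
  define xs where "xs = [Some t, Some a]"
  define i where "i = (if t = Blank then 0 else 1::nat)"
  define zs where "zs = xs[i := None]"
  have i2: "i < length xs" unfolding xs_def i_def by simp
  have xi: "xs ! i = Some Blank" using assms unfolding xs_def i_def by auto
  have cc: "chosen_cut (fst rr) (snd rr) xs i
             (\<lambda>ys p. case ys ! p of
                        Some c \<Rightarrow> if c = Blank then Some (ys[p := None], ()) else None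
                      | None \<Rightarrow> None) = Some (zs, ())"
  proof (rule chosen_cut_Some[OF i2])
    show "length zs = length xs" unfolding zs_def by simp
  next
    fix j assume j: "j < length xs" "(fst rr + j) mod length xs = i"
    have "rotate (fst rr) xs ! j = Some Blank" using j xi by (simp add: nth_rotate)
    moreover have "(rotate (fst rr) xs)[j := None] = rotate (fst rr) zs"
      unfolding zs_def using rotate_update[OF j] .
    ultimately show "(case rotate (fst rr) xs ! j of
                        Some c \<Rightarrow> if c = Blank then Some ((rotate (fst rr) xs)[j := None], ()) else None
                      | None \<Rightarrow> None) = Some (rotate (fst rr) zs, ())" by simp
  qed
  show ?thesis
    unfolding print_stack_def using cc assms
    by (auto simp: xs_def i_def zs_def)
qed

lemma print_seq_rot:
  assumes "0 < length xs" "(r + p) mod length xs = i"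
  shows "print_seq R n w tpl p L (rotate r xs) = map_option (rotate r) (print_seq R n w tpl i L xs)"
  using assms
proof (induction L arbitrary: xs)
  case Nil
  then show ?case by simp
next
  case (Cons ab L)
  obtain a b where ab: "ab = (a, b)" by (cases ab)
  define q where "q = length xs"
  define k where "k = a * w + b"
  define j where "j = (p + k) mod q"
  define i' where "i' = (i + k) mod q"
  have jq: "j < q" unfolding j_def q_def using Cons.prems by simp
  have ji: "(r + j) mod q = i'"
    unfolding j_def i'_def using Cons.prems(2)[folded q_def]
    by (metis add.assoc mod_add_left_eq mod_add_right_eq)
  have nth: "rotate r xs ! j = xs ! i'" using jq ji unfolding q_def by (simp add: nth_rotate)
  have upd: "(rotate r xs)[j := c] = rotate r (xs[i' := c])" for c
    using rotate_update[of j xs r i' c] jq ji unfolding q_def by simp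
  have IH: "print_seq R n w tpl p L (rotate r (xs[i' := c])) =
            map_option (rotate r) (print_seq R n w tpl i L (xs[i' := c]))" for c
    using Cons.IH[of "xs[i' := c]"] Cons.prems by simp
  show ?case
    unfolding ab
    using nth upd IH
    by (simp add: Let_def j_def[symmetric, unfolded k_def q_def] i'_def[symmetric, unfolded k_def q_def]
        add.assoc split: option.split)
qed


lemma print_seq_gen:
  assumes "distinct L" "length area = q" "0 < q"
    "inj_on (\<lambda>(a,b). (p + a*w + b) mod q) (set L)"
    "\<forall>(a,b)\<in>set L. tpl!(a*n+b) = Blank \<or> tpl!(a*n+b) = Num 1"
    "\<forall>(a,b)\<in>set L. tpl!(a*n+b) = Num 1 \<longrightarrow> area!((p + a*w+b) mod q) = Blank"
  shows "\<exists>A'. print_seq R n w tpl p L area = Some A' \<and> length A' = q \<and>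
     (\<forall>k<q. A'!k = (if \<exists>(a,b)\<in>set L. tpl!(a*n+b) = Num 1 \<and> (p+a*w+b) mod q = k
                     then Num 1 else area!k))"
  using assms
proof (induction L arbitrary: area)
  case Nil
  then show ?case by simp
next
  case (Cons ab L)
  obtain a b where ab: "ab = (a, b)" by (cases ab)
  define pos where "pos = (p + a*w + b) mod q"
  define t where "t = tpl!(a*n+b)"
  define c where "c = (if t = Blank then area!pos else t)"
  have ps: "print_stack (R (a, b)) t (area ! pos) = Some c"
    unfolding c_def
    by (rule print_stack_ok) (use Cons.prems in \<open>auto simp: ab t_def pos_def\<close>)
  have posq: "pos < q" unfolding pos_def using Cons.prems by simp
  define area1 where "area1 = area[pos := c]"
  have notin: "(p + a'*w + b') mod q \<noteq> pos" if "(a', b') \<in> set L" for a' b'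
  proof
    assume "(p + a'*w + b') mod q = pos"
    then have "(a', b') = (a, b)"
      using Cons.prems(4) that unfolding pos_def ab by (auto simp: inj_on_def)
    then show False using Cons.prems(1) that ab by auto
  qed
  have "\<exists>A'. print_seq R n w tpl p L area1 = Some A' \<and> length A' = q \<and>
     (\<forall>k<q. A'!k = (if \<exists>(a,b)\<in>set L. tpl!(a*n+b) = Num 1 \<and> (p+a*w+b) mod q = k
                     then Num 1 else area1!k))"
  proof (rule Cons.IH)
    show "distinct L" using Cons.prems by simp
    show "length area1 = q" using Cons.prems by (simp add: area1_def)
    show "0 < q" by fact
    show "inj_on (\<lambda>(a, b). (p + a * w + b) mod q) (set L)"
      using Cons.prems(4) by (auto simp: inj_on_def)
    show "\<forall>(a, b)\<in>set L. tpl ! (a * n + b) = Blank \<or> tpl ! (a * n + b) = Num 1"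
      using Cons.prems(5) by auto
    show "\<forall>(a, b)\<in>set L. tpl ! (a * n + b) = Num 1 \<longrightarrow> area1 ! ((p + a * w + b) mod q) = Blank"
    proof (intro ballI)
      fix x assume x: "x \<in> set L"
      obtain a' b' where x': "x = (a', b')" by (cases x)
      have "(p + a' * w + b') mod q \<noteq> pos" using notin x x' by blast
      then show "case x of (a, b) \<Rightarrow> tpl ! (a * n + b) = Num 1 \<longrightarrow> area1 ! ((p + a * w + b) mod q) = Blank"
        using Cons.prems(6) x x' by (auto simp: area1_def)
    qed
  qed
  then obtain A' where A': "print_seq R n w tpl p L area1 = Some A'" "length A' = q"
     "\<forall>k<q. A'!k = (if \<exists>(a,b)\<in>set L. tpl!(a*n+b) = Num 1 \<and> (p+a*w+b) mod q = k
                     then Num 1 else area1!k)" by blast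
  have run: "print_seq R n w tpl p (ab # L) area = Some A'"
    using ps A'(1) Cons.prems(2) by (simp add: ab Let_def pos_def[symmetric] t_def[symmetric] area1_def)
  have tv: "t = Blank \<or> t = Num 1" using Cons.prems(5) by (auto simp: ab t_def)
  show ?case
  proof (intro exI conjI allI impI)
    show "print_seq R n w tpl p (ab # L) area = Some A'" by (fact run)
    show "length A' = q" by fact
    fix k assume k: "k < q"
    show "A'!k = (if \<exists>(a,b)\<in>set (ab # L). tpl!(a*n+b) = Num 1 \<and> (p+a*w+b) mod q = k
                     then Num 1 else area!k)"
    proof (cases "k = pos")
      case True
      then show ?thesis using A'(3) k notin tv Cons.prems(2)
        by (auto simp: ab area1_def c_def t_def[symmetric] pos_def[symmetric])
    next
      case False
      then show ?thesis using A'(3) k Cons.prems(2)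
        by (auto simp: ab area1_def pos_def[symmetric])
    qed
  qed
qed


lemma concat_grid:
  "concat (map (\<lambda>a. map (f a) [0..<m]) [0..<k]) = map (\<lambda>i. f (i div m) (i mod m)) [0..<k*m]"
proof (cases "m = 0")
  case True then show ?thesis by simp
next
  case False
  show ?thesis
  proof (induction k)
    case 0 then show ?case by simp
  next
    case (Suc k)
    have e: "Suc k * m = k*m + m" by simp
    have "[0..<Suc k * m] = [0..<k*m] @ [k*m..<k*m+m]"
      unfolding e by (rule upt_add_eq_append) simp
    moreover have "map (\<lambda>i. f (i div m) (i mod m)) [k*m..<k*m+m] = map (f k) [0..<m]"
    proof (rule nth_equalityI)
      fix j assume "j < length (map (\<lambda>i. f (i div m) (i mod m)) [k*m..<k*m+m])"
      then have j: "j < m" by simp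
      have "(k*m + j) div m = k" "(k*m+j) mod m = j" using j False by auto
      moreover have "[k*m..<k*m+m] ! j = k*m + j" using j by simp
      ultimately show "map (\<lambda>i. f (i div m) (i mod m)) [k*m..<k*m+m] ! j = map (f k) [0..<m] ! j"
        using j by simp
    qed simp
    ultimately show ?case using Suc.IH by simp
  qed
qed

lemma idx_div: "(y::nat) < w \<Longrightarrow> (x*w+y) div w = x" by simp
lemma idx_mod: "(y::nat) < w \<Longrightarrow> (x*w+y) mod w = y" by simp

lemma idx_lt: assumes "(a::nat) < n" "b < n" shows "a*n+b < n*n"
proof -
  have "a*n+b < (a+1)*n" using assms by simp
  also have "(a+1)*n \<le> n*n" using assms by (intro mult_le_mono1) simp
  finally show ?thesis .
qed

lemma template_nth:
  assumes "a < n" "b < n"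
  shows "template n s ! (a*n+b) = (if a < s \<and> b < s then Num 1 else Blank)"
proof -
  have "a*n+b < n*n" using idx_lt[OF assms] .
  then show ?thesis
    unfolding template_def concat_grid using assms by (simp add: idx_div idx_mod)
qed

definition cover :: "nat \<Rightarrow> (nat \<times> nat) set \<Rightarrow> card list" where
  "cover w U = map (\<lambda>k. if (k div w, k mod w) \<in> U then Num 1 else Blank) [0..<w*w]"

lemma cover_len[simp]: "length (cover w U) = w*w" by (simp add: cover_def)

lemma cover_nth: "k < w*w \<Longrightarrow> cover w U ! k = (if (k div w, k mod w) \<in> U then Num 1 else Blank)"
  by (simp add: cover_def)

lemma cover_nth2: "x < w \<Longrightarrow> y < w \<Longrightarrow> cover w U ! (x*w+y) = (if (x, y) \<in> U then Num 1 else Blank)"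
proof -
  assume a: "x < w" "y < w"
  have "x*w+y < w*w" using idx_lt[OF a] .
  then show ?thesis using a by (simp add: cover_nth)
qed


definition gridL :: "nat \<Rightarrow> (nat \<times> nat) list" where
  "gridL n = concat (map (\<lambda>a. map (\<lambda>b. (a, b)) [0..<n]) [0..<n])"

lemma gridL_set: "set (gridL n) = {0..<n} \<times> {0..<n}"
  unfolding gridL_def by auto

lemma gridL_distinct: "distinct (gridL n)"
proof -
  have "gridL n = map (\<lambda>i. (i div n, i mod n)) [0..<n*n]"
    unfolding gridL_def using concat_grid[of "\<lambda>a b. (a, b)" n n] by simp
  moreover have "inj_on (\<lambda>i. (i div n, i mod n)) {0..<n*n}"
    by (intro inj_onI) (metis div_mult_mod_eq prod.inject)
  ultimately show ?thesis by (simp add: distinct_map)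
qed

lemma print_unrot:
  assumes s1: "1 \<le> s" and rs: "r + s \<le> n" and cs: "c + s \<le> n"
    and dis: "cells (r, c, s) \<inter> U = {}"
    and w: "w = 2 * n - 1"
  shows "print_seq R n w (template n s) (r*w+c) (gridL n) (cover w U)
           = Some (cover w (U \<union> cells (r, c, s)))"
proof -
  have n1: "1 \<le> n" using s1 rs by simp
  have wn: "n \<le> w" "r < n" "c < n" using w n1 s1 rs cs by auto
  have posf: "(r*w+c + a*w + b) mod (w*w) = (r+a)*w + (c+b)" if "a < n" "b < n" for a b
  proof -
    have "r + a < w" "c + b < w" using that wn w by auto
    then have "(r+a)*w + (c+b) < w*w" by (rule idx_lt)
    moreover have "r*w+c + a*w + b = (r+a)*w + (c+b)" by (simp add: algebra_simps)
    ultimately show ?thesis by simp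
  qed
  have q: "0 < w*w" using wn n1 by simp
  have "\<exists>A'. print_seq R n w (template n s) (r*w+c) (gridL n) (cover w U) = Some A' \<and> length A' = w*w \<and>
     (\<forall>k<w*w. A'!k = (if \<exists>(a,b)\<in>set (gridL n). template n s!(a*n+b) = Num 1 \<and> (r*w+c+a*w+b) mod (w*w) = k
                     then Num 1 else cover w U!k))"
  proof (rule print_seq_gen[OF gridL_distinct cover_len q])
    show "inj_on (\<lambda>(a, b). (r * w + c + a * w + b) mod (w * w)) (set (gridL n))"
    proof (rule inj_onI, clarsimp simp: gridL_set)
      fix a b a' b' assume ab: "a < n" "b < n" "a' < n" "b' < n"
        and e: "(r * w + c + a * w + b) mod (w * w) = (r * w + c + a' * w + b') mod (w * w)"
      have lt: "c + b < w" "c + b' < w" using ab wn w by auto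
      have "(r+a)*w + (c+b) = (r+a')*w + (c+b')" using e posf ab by simp
      then have "r + a = r + a'" "c + b = c + b'"
        using idx_div[OF lt(1), of "r+a"] idx_div[OF lt(2), of "r+a'"]
              idx_mod[OF lt(1), of "r+a"] idx_mod[OF lt(2), of "r+a'"] by metis+
      then show "a = a' \<and> b = b'" by simp
    qed
    show "\<forall>(a, b)\<in>set (gridL n). template n s ! (a * n + b) = Blank \<or> template n s ! (a * n + b) = Num 1"
      by (auto simp: gridL_set template_nth)
    show "\<forall>(a, b)\<in>set (gridL n). template n s ! (a * n + b) = Num 1 \<longrightarrow>
            cover w U ! ((r * w + c + a * w + b) mod (w * w)) = Blank"
    proof (clarsimp simp: gridL_set)
      fix a b assume ab: "a < n" "b < n" and t: "template n s ! (a * n + b) = Num 1"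
      have as: "a < s" "b < s" using t ab by (auto simp: template_nth split: if_splits)
      have "(r+a, c+b) \<in> cells (r,c,s)" using as by simp
      then have nU: "(r+a, c+b) \<notin> U" using dis by blast
      have "r + a < w" "c + b < w" using ab wn w by auto
      then show "cover w U ! ((r * w + c + a * w + b) mod (w * w)) = Blank"
        using posf[OF ab] nU by (simp add: cover_nth2)
    qed
  qed
  then obtain A' where A': "print_seq R n w (template n s) (r*w+c) (gridL n) (cover w U) = Some A'"
    "length A' = w*w"
    "\<forall>k<w*w. A'!k = (if \<exists>(a,b)\<in>set (gridL n). template n s!(a*n+b) = Num 1 \<and> (r*w+c+a*w+b) mod (w*w) = k
                     then Num 1 else cover w U!k)" by blast
  have "A' = cover w (U \<union> cells (r, c, s))"
  proof (rule nth_equalityI)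
    show "length A' = length (cover w (U \<union> cells (r, c, s)))" using A'(2) by simp
    fix k assume "k < length A'"
    then have k: "k < w*w" using A'(2) by simp
    define x where "x = k div w"
    define y where "y = k mod w"
    have kxy: "k = x*w + y" unfolding x_def y_def by simp
    have xw: "x < w" unfolding x_def using k by (simp add: less_mult_imp_div_less)
    have yw: "y < w" unfolding y_def using q by simp
    have ex: "(\<exists>(a,b)\<in>set (gridL n). template n s!(a*n+b) = Num 1 \<and> (r*w+c+a*w+b) mod (w*w) = k)
              \<longleftrightarrow> (x, y) \<in> cells (r, c, s)"
    proof
      assume "\<exists>(a,b)\<in>set (gridL n). template n s!(a*n+b) = Num 1 \<and> (r*w+c+a*w+b) mod (w*w) = k"
      then obtain a b where ab: "a < n" "b < n" "template n s!(a*n+b) = Num 1"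
        "(r*w+c+a*w+b) mod (w*w) = k" by (auto simp: gridL_set)
      have as: "a < s" "b < s" using ab by (auto simp: template_nth split: if_splits)
      have lt: "c + b < w" using ab wn w by auto
      have "k = (r+a)*w + (c+b)" using ab posf by simp
      then have "x = r + a" "y = c + b" unfolding x_def y_def using idx_div[OF lt] idx_mod[OF lt] by simp_all
      then show "(x, y) \<in> cells (r, c, s)" using as by simp
    next
      assume "(x, y) \<in> cells (r, c, s)"
      then have xy: "r \<le> x" "x < r + s" "c \<le> y" "y < c + s" by auto
      define a where "a = x - r"
      define b where "b = y - c"
      have ab: "a < n" "b < n" "a < s" "b < s" using xy rs cs unfolding a_def b_def by auto
      have "(r*w+c+a*w+b) mod (w*w) = (r+a)*w + (c+b)" using posf ab by simp
      also have "\<dots> = k" using kxy xy unfolding a_def b_def by simp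
      finally have e: "(r*w+c+a*w+b) mod (w*w) = k" .
      have "template n s!(a*n+b) = Num 1" using ab by (simp add: template_nth)
      moreover have "(a, b) \<in> set (gridL n)" using ab by (simp add: gridL_set)
      ultimately show "\<exists>(a,b)\<in>set (gridL n). template n s!(a*n+b) = Num 1 \<and> (r*w+c+a*w+b) mod (w*w) = k"
        using e by blast
    qed
    show "A' ! k = cover w (U \<union> cells (r, c, s)) ! k"
      using A'(3) k ex by (simp add: cover_nth x_def y_def)
  qed
  then show ?thesis using A'(1) by simp
qed


lemma templates_len: "length (templates n) = n" by (simp add: templates_def)
lemma templates_nth: assumes "s - 1 < n" "1 \<le> s" shows "templates n ! (s - 1) = template n s"
proof -
  have "templates n ! (s - 1) = template n ([1..<n+1] ! (s - 1))"
    unfolding templates_def using assms by (intro nth_map) simp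
  also have "[1..<n+1] ! (s - 1) = s" using assms by (subst nth_upt) auto
  finally show ?thesis .
qed

lemma step_ok:
  assumes s1: "1 \<le> s" and rs: "r + s \<le> n" and cs: "c + s \<le> n"
    and dis: "cells (r, c, s) \<inter> U = {}"
    and dg: "set dots \<subseteq> grid n"
    and dc: "\<forall>j<length dots. (dots!j \<in> U \<union> cells (r,c,s)) = (j \<le> i)"
  shows "meadows_step \<sigma> n dots i (r,c,s) (cover (2*n-1) U, templates n)
           = Some (cover (2*n-1) (U \<union> cells (r,c,s)), templates n)"
proof -
  define w where "w = 2 * n - 1"
  define L where "L = gridL n"
  define R where "R = (\<lambda>(a, b). (\<sigma> [i,2,a,b,0], \<sigma> [i,2,a,b,1]))"
  define xs where "xs = cover w U"
  define zs where "zs = cover w (U \<union> cells (r,c,s))"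
  define T where "T = templates n"
  have n1: "1 \<le> n" using s1 rs by simp
  have wn: "n \<le> w" "r < n" "c < n" using w_def n1 s1 rs cs by auto
  have i0: "r*w + c < length xs" unfolding xs_def using idx_lt[of r w c] wn by simp
  have unrot: "print_seq R n w (template n s) (r*w+c) L xs = Some zs"
    unfolding L_def xs_def zs_def by (rule print_unrot[OF s1 rs cs dis w_def])
  have outer: "chosen_cut (\<sigma> [i,0,0]) (\<sigma> [i,0,1]) xs (r * w + c)
                (\<lambda>A p. case chosen_cut (\<sigma> [i,1,0]) (\<sigma> [i,1,1]) T (s - 1)
                    (\<lambda>T pt. case print_seq R n w (T ! pt) p L A of
                             None \<Rightarrow> None
                           | Some A' \<Rightarrow> Some (T[pt := template n s], A')) of
                   None \<Rightarrow> None
                 | Some (T', A') \<Rightarrow> Some (A', T')) = Some (zs, T)"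
  proof (rule chosen_cut_Some[OF i0])
    show "length zs = length xs" unfolding zs_def xs_def by simp
    fix j assume j: "j < length xs" "(\<sigma> [i,0,0] + j) mod length xs = r * w + c"
    have sn: "s - 1 < length T" unfolding T_def templates_len using s1 rs by simp
    have inner: "chosen_cut (\<sigma> [i,1,0]) (\<sigma> [i,1,1]) T (s - 1)
                    (\<lambda>T pt. case print_seq R n w (T ! pt) j L (rotate (\<sigma> [i,0,0]) xs) of
                             None \<Rightarrow> None
                           | Some A' \<Rightarrow> Some (T[pt := template n s], A'))
                 = Some (T, rotate (\<sigma> [i,0,0]) zs)"
    proof (rule chosen_cut_Some[OF sn refl])
      fix jt assume jt: "jt < length T" "(\<sigma> [i,1,0] + jt) mod length T = s - 1"
      have Tt: "T ! (s - 1) = template n s" unfolding T_def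
        using sn s1 templates_nth[of s n] by (simp add: T_def templates_len)
      have "rotate (\<sigma> [i,1,0]) T ! jt = template n s"
        using jt Tt by (simp add: nth_rotate)
      moreover have "(rotate (\<sigma> [i,1,0]) T)[jt := template n s] = rotate (\<sigma> [i,1,0]) T"
      proof -
        have "T[s - 1 := template n s] = T" by (metis Tt list_update_id)
        then show ?thesis using rotate_update[OF jt, of "template n s"] by simp
      qed
      moreover have "print_seq R n w (template n s) j L (rotate (\<sigma> [i,0,0]) xs)
                     = Some (rotate (\<sigma> [i,0,0]) zs)"
        using print_seq_rot[of xs "\<sigma> [i,0,0]" j "r*w+c" R n w "template n s" L] j unrot by force
      ultimately show "(case print_seq R n w (rotate (\<sigma> [i,1,0]) T ! jt) j L (rotate (\<sigma> [i,0,0]) xs) of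
                             None \<Rightarrow> None
                           | Some A' \<Rightarrow> Some ((rotate (\<sigma> [i,1,0]) T)[jt := template n s], A'))
              = Some (rotate (\<sigma> [i,1,0]) T, rotate (\<sigma> [i,0,0]) zs)" by simp
    qed
    show "(case chosen_cut (\<sigma> [i,1,0]) (\<sigma> [i,1,1]) T (s - 1)
                    (\<lambda>T pt. case print_seq R n w (T ! pt) j L (rotate (\<sigma> [i,0,0]) xs) of
                             None \<Rightarrow> None
                           | Some A' \<Rightarrow> Some (T[pt := template n s], A')) of
                   None \<Rightarrow> None
                 | Some (T', A') \<Rightarrow> Some (A', T')) = Some (rotate (\<sigma> [i,0,0]) zs, T)"
      using inner by simp
  qed
  have chk: "\<forall>j<length dots. zs ! (fst (dots ! j) * w + snd (dots ! j)) = (if j \<le> i then Num 1 else Blank)"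
  proof (intro allI impI)
    fix j assume j: "j < length dots"
    have "dots ! j \<in> grid n" using dg j by auto
    then have "fst (dots ! j) < w" "snd (dots ! j) < w" using wn by (auto simp: grid_def)
    then show "zs ! (fst (dots ! j) * w + snd (dots ! j)) = (if j \<le> i then Num 1 else Blank)"
      using dc j unfolding zs_def by (simp add: cover_nth2)
  qed
  show ?thesis
    using outer[unfolded w_def L_def gridL_def R_def xs_def zs_def T_def]
      chk[unfolded w_def zs_def]
    by (simp add: meadows_step_def Let_def)
qed


lemma cells_fin: "finite (cells B)"
  by (cases B) auto

theorem lemma4:
  fixes n :: nat and dots :: "(nat \<times> nat) list" and Bs :: "(nat \<times> nat \<times> nat) list"
  assumes "meadows_puzzle n dots"
    and "is_meadows_solution n dots (set Bs)"
    and "length Bs = length dots"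
    and "\<forall>i<length dots. dots ! i \<in> cells (Bs ! i)"
  shows "\<forall>\<sigma>. meadows_accepts \<sigma> n dots Bs"
proof
  fix \<sigma>
  have dd: "distinct dots" and dg: "set dots \<subseteq> grid n"
    using assms(1) by (auto simp: meadows_puzzle_def)
  note S = assms(2)[unfolded is_meadows_solution_def]
  have S1: "\<forall>B\<in>set Bs. 1 \<le> snd (snd B) \<and> cells B \<subseteq> grid n"
    using S by (rule conjunct1)
  have S2: "\<forall>B\<in>set Bs. \<forall>B'\<in>set Bs. B \<noteq> B' \<longrightarrow> cells B \<inter> cells B' = {}"
    using S[THEN conjunct2] by (rule conjunct1)
  have S3: "\<Union> (cells ` set Bs) = grid n"
    using S[THEN conjunct2, THEN conjunct2] by (rule conjunct1)
  have S4: "\<forall>B\<in>set Bs. card (set dots \<inter> cells B) = 1"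
    using S[THEN conjunct2, THEN conjunct2] by (rule conjunct2)
  define m where "m = length Bs"
  have kd: False if "j < m" "j' < m" "j \<noteq> j'" "dots ! j \<in> cells (Bs ! j')" for j j'
  proof -
    have "Bs ! j' \<in> set Bs" using that m_def by simp
    then have "card (set dots \<inter> cells (Bs ! j')) = 1" using S4 by blast
    then obtain x where x: "set dots \<inter> cells (Bs ! j') = {x}" by (rule card_1_singletonE)
    have "dots ! j' \<in> cells (Bs ! j')" using assms(4) assms(3) that m_def by simp
    moreover have "dots ! j \<in> set dots" "dots ! j' \<in> set dots"
      using that assms(3) m_def by auto
    ultimately have a1: "dots ! j' \<in> set dots \<inter> cells (Bs ! j')"
      and a2: "dots ! j \<in> set dots \<inter> cells (Bs ! j')" using that(4) by blast+
    have "dots ! j = dots ! j'" using a1 a2 unfolding x by simp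
    then show False using dd that assms(3) m_def by (simp add: nth_eq_iff_index_eq)
  qed
  define U where "U = (\<lambda>k. \<Union>j\<in>{..<k}. cells (Bs ! j))"
  have US: "U (Suc k) = U k \<union> cells (Bs ! k)" for k
    unfolding U_def by (simp add: lessThan_Suc Un_commute)
  have steps: "\<And>i. i \<le> m \<Longrightarrow> Cs = drop i Bs \<Longrightarrow>
     meadows_steps \<sigma> n dots Cs i (cover (2*n-1) (U i), templates n)
       = Some (cover (2*n-1) (U m), templates n)" for Cs
  proof (induction Cs)
    case Nil
    then have "i = m" using m_def by simp
    then show ?case by simp
  next
    case (Cons B Cs i)
    have im: "i < m" using Cons.prems m_def by (metis drop_all leI list.distinct(1))
    have BB: "B = Bs ! i" and CC: "Cs = drop (Suc i) Bs"
      using Cons.prems(2) im m_def by (metis Cons_nth_drop_Suc list.inject)+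
    obtain r c s where rcs: "B = (r, c, s)" by (cases B) auto
    have Bin: "B \<in> set Bs" using BB im m_def by simp
    have s1: "1 \<le> s" using S1 Bin rcs by auto
    have sub: "cells (r,c,s) \<subseteq> grid n" using S1 Bin unfolding rcs by blast
    have "(r + s - 1, c + s - 1) \<in> cells (r,c,s)" using s1 by auto
    then have "(r + s - 1, c + s - 1) \<in> grid n" using sub by blast
    then have rs: "r + s \<le> n" "c + s \<le> n" using s1 by (auto simp: grid_def)
    have dis: "cells (r,c,s) \<inter> U i = {}"
    proof -
      have "cells (Bs ! i) \<inter> cells (Bs ! j) = {}" if "j < i" for j
      proof -
        have "Bs ! j \<noteq> Bs ! i"
        proof
          assume e: "Bs ! j = Bs ! i"
          have "j < length dots" using that im m_def assms(3) by simp
          then have "dots ! j \<in> cells (Bs ! j)" using assms(4) by blast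
          then have "dots ! j \<in> cells (Bs ! i)" using e by simp
          then show False using kd[of j i] that im by simp
        qed
        then show ?thesis using S2 that im m_def by simp
      qed
      then show ?thesis unfolding U_def using BB rcs by auto
    qed
    have dc: "\<forall>j<length dots. (dots!j \<in> U i \<union> cells (r,c,s)) = (j \<le> i)"
    proof (intro allI impI)
      fix j assume j: "j < length dots"
      have eq: "U i \<union> cells (r,c,s) = U (Suc i)" using US BB rcs by simp
      show "(dots!j \<in> U i \<union> cells (r,c,s)) = (j \<le> i)"
        unfolding eq
      proof
        assume "dots ! j \<in> U (Suc i)"
        then obtain j' where "j' < Suc i" "dots ! j \<in> cells (Bs ! j')" unfolding U_def by auto
        then show "j \<le> i" using kd[of j j'] j im assms(3) m_def by (cases "j = j'") auto
      next
        assume "j \<le> i"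
        then show "dots ! j \<in> U (Suc i)" using assms(4) j unfolding U_def by auto
      qed
    qed
    have st: "meadows_step \<sigma> n dots i B (cover (2*n-1) (U i), templates n)
           = Some (cover (2*n-1) (U (Suc i)), templates n)"
      using step_ok[OF s1 rs dis dg dc, of \<sigma>] US[of i] unfolding BB[symmetric] rcs by simp
    show ?case
      using st Cons.IH[of "Suc i"] CC im by simp
  qed
  have U0: "U 0 = {}" unfolding U_def by simp
  have "set Bs = (\<lambda>j. Bs ! j) ` {..<m}"
    unfolding m_def set_conv_nth by auto
  then have "cells ` set Bs = (\<lambda>j. cells (Bs ! j)) ` {..<m}"
    by (simp add: image_image)
  then have Um: "U m = grid n" unfolding U_def using S3 by simp
  have rep: "replicate ((2*n-1) * (2*n-1)) Blank = cover (2*n-1) {}"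
    by (simp add: cover_def map_replicate_const)
  have run: "meadows_steps \<sigma> n dots Bs 0 (replicate ((2*n-1) * (2*n-1)) Blank, templates n)
      = Some (cover (2*n-1) (grid n), templates n)"
    using steps[of 0 Bs] U0 Um rep by simp
  have fin: "\<forall>x<2*n-1. \<forall>y<2*n-1. cover (2*n-1) (grid n) ! (x * (2*n-1) + y)
        = (if x < n \<and> y < n then Num 1 else Blank)"
    by (auto simp: cover_nth2 grid_def)
  show "meadows_accepts \<sigma> n dots Bs"
    unfolding meadows_accepts_def Let_def using run fin by (simp add: templates_def)
qed

end
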